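(* Let $V,W$ be complex vector spaces, let $M=(M_1,\dots,M_s)\in\mathrm{Hom}(V,W)^s$, and suppose $\mathrm{rk}(M)\geq s$. Then there is $v\in V$ such that the span $\langle M_1v,\dots,M_sv\rangle\subseteq W$ has dimension $s$.
   Context: Rank of a tuple: for vector spaces $V,W$ and $M=(M_1,\dots,M_s)\in\mathrm{Hom}(V,W)^s$, $\mathrm{rk}(M)$ is the infimum of $\mathrm{rk}(\sum_i\lambda_iM_i)\in\mathbb{Z}_{\ge0}\cup\{\infty\}$ over all nonzero $(\lambda_1,\dots,\lambda_s)\in\mathbb{C}^s$ (so $\mathrm{rk}(M)=\infty$ if $s=0$). *)

theory Defs
  imports "HOL-Library.Extended_Nat" Main
begin

definition map_rank :: "(complex \<Rightarrow> 'w::ab_group_add \<Rightarrow> 'w) \<Rightarrow> ('v \<Rightarrow> 'w) \<Rightarrow> enat" where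
  "map_rank sW f = (SUP B \<in> {B. finite B \<and> B \<subseteq> range f \<and> \<not> module.dependent sW B}. enat (card B))"

text \<open>Rank of a tuple M = (M 0, ..., M (s-1)): infimum over nonzero coefficient
  vectors \<lambda> \<in> C^s of the rank of \<Sum> \<lambda>_i M_i (equal to \<infinity> when s = 0).\<close>
definition tuple_rank :: "(complex \<Rightarrow> 'w::ab_group_add \<Rightarrow> 'w) \<Rightarrow> nat \<Rightarrow> (nat \<Rightarrow> 'v \<Rightarrow> 'w) \<Rightarrow> enat" where
  "tuple_rank sW s M =
     (INF c \<in> {c::nat \<Rightarrow> complex. \<exists>i<s. c i \<noteq> 0}.
        map_rank sW (\<lambda>x. \<Sum>i<s. sW (c i) (M i x)))"

end

theory Submission
  imports Defs
begin

definition famind :: "('a::zero \<Rightarrow> 'b::ab_group_add \<Rightarrow> 'b) \<Rightarrow> 'i set \<Rightarrow> ('i \<Rightarrow> 'b) \<Rightarrow> bool" where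
  "famind sc I x \<longleftrightarrow> (\<forall>c. (\<Sum>i\<in>I. sc (c i) (x i)) = 0 \<longrightarrow> (\<forall>i\<in>I. c i = 0))"

lemma famindD: "famind sc I x \<Longrightarrow> (\<Sum>i\<in>I. sc (c i) (x i)) = 0 \<Longrightarrow> i \<in> I \<Longrightarrow> c i = 0"
  unfolding famind_def by (erule allE[of _ c]) blast

context vector_space begin


lemma famindep_inj:
  assumes "famind scale I x" "finite I" shows "inj_on x I"
proof (rule inj_onI, rule ccontr)
  fix i j assume ij: "i \<in> I" "j \<in> I" "x i = x j" "i \<noteq> j"
  define c where "c k = (if k = i then 1 else if k = j then -1 else (0::'a))" for k
  have "(\<Sum>k\<in>I. c k *s x k) = (\<Sum>k\<in>{i,j}. c k *s x k)"
    using ij assms(2) by (intro sum.mono_neutral_right) (auto simp: c_def)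
  also have "\<dots> = 0" using ij by (simp add: c_def)
  finally have "c i = 0" using famindD[OF assms(1)] ij by blast
  then show False by (simp add: c_def)
qed

lemma famindep_indep:
  fixes x :: "'i \<Rightarrow> 'b"
  assumes "famind scale I x" "finite I" shows "independent (x ` I)"
proof
  assume "dependent (x ` I)"
  moreover have fin: "finite (x ` I)" using assms(2) by simp
  ultimately obtain u where u: "\<exists>v\<in>x ` I. u v \<noteq> 0" "(\<Sum>v\<in>x ` I. u v *s v) = 0"
    using dependent_finite[OF fin] by blast
  have inj: "inj_on x I" using famindep_inj assms by blast
  have s0: "(\<Sum>i\<in>I. u (x i) *s x i) = 0" using u(2) sum.reindex[OF inj, of "\<lambda>v. u v *s v"] by simp
  have "\<forall>i\<in>I. u (x i) = 0"
  proof
    fix i assume "i \<in> I" then show "u (x i) = 0" using famindD[OF assms(1) s0] by simp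
  qed
  then show False using u(1) by blast
qed

lemma indep_famindep:
  fixes x :: "'i \<Rightarrow> 'b"
  assumes inj: "inj_on x I" and ind: "independent (x ` I)" and fI: "finite I" shows "famind scale I x"
  unfolding famind_def
proof (intro allI impI ballI)
  fix c i assume c: "(\<Sum>i\<in>I. c i *s x i) = 0" and i: "i \<in> I"
  show "c i = 0"
  proof (rule ccontr)
    assume ci: "c i \<noteq> 0"
    define u where "u v = c (inv_into I x v)" for v
    have fin: "finite (x ` I)" using fI by simp
    have e1: "(\<Sum>v\<in>x ` I. u v *s v) = (\<Sum>i\<in>I. u (x i) *s x i)"
      by (rule sum.reindex[OF inj, unfolded comp_def])
    have e2: "(\<Sum>i\<in>I. u (x i) *s x i) = (\<Sum>i\<in>I. c i *s x i)"
      by (rule sum.cong) (simp_all add: u_def inv_into_f_f[OF inj])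
    have ux: "u (x i) \<noteq> 0" using ci i by (simp add: u_def inv_into_f_f[OF inj])
    have "dependent (x ` I)"
      unfolding dependent_finite[OF fin]
      apply (rule exI[of _ u])
      apply (intro conjI)
      using ux i apply blast
      using e1 e2 c by simp
    then show False using ind by blast
  qed
qed

lemma lin_comb:
  "(\<Sum>m\<in>E. d m *s (\<Sum>i\<in>I. c m i *s a i)) = (\<Sum>i\<in>I. (\<Sum>m\<in>E. d m * c m i) *s a i)"
  by (simp add: scale_sum_right scale_sum_left) (rule sum.swap)

lemma eig_indep:
  fixes a b :: "'i \<Rightarrow> 'b" and C :: "'a \<Rightarrow> 'i \<Rightarrow> 'a"
  assumes I: "finite I" and a: "famind scale I a" and E: "finite E"
    and eig: "\<forall>\<mu>\<in>E. (\<exists>i\<in>I. C \<mu> i \<noteq> 0) \<and> (\<Sum>i\<in>I. C \<mu> i *s b i) = \<mu> *s (\<Sum>i\<in>I. C \<mu> i *s a i)"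
  shows "famind scale E (\<lambda>\<mu>. \<Sum>i\<in>I. C \<mu> i *s a i)"
  using E eig
proof (induction E rule: finite_induct)
  case empty
  then show ?case by (simp add: famind_def)
next
  case (insert \<nu> E)
  define A where "A \<mu> = (\<Sum>i\<in>I. C \<mu> i *s a i)" for \<mu>
  define B where "B \<mu> = (\<Sum>i\<in>I. C \<mu> i *s b i)" for \<mu>
  have BA: "B \<mu> = \<mu> *s A \<mu>" if "\<mu> \<in> insert \<nu> E" for \<mu>
    using insert.prems that unfolding A_def B_def by blast
  have IH: "famind scale E A" using insert.IH insert.prems unfolding A_def by simp
  show ?case unfolding famind_def A_def[symmetric]
  proof (intro allI impI)
    fix d assume d0: "(\<Sum>\<mu>\<in>insert \<nu> E. d \<mu> *s A \<mu>) = 0"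
    have "(\<Sum>i\<in>I. (\<Sum>\<mu>\<in>insert \<nu> E. d \<mu> * C \<mu> i) *s a i) = 0"
      using d0 lin_comb[where d=d and E="insert \<nu> E" and c=C and I=I and a=a] by (simp add: A_def)
    then have z: "\<forall>i\<in>I. (\<Sum>\<mu>\<in>insert \<nu> E. d \<mu> * C \<mu> i) = 0"
      using famindD[OF a, where c="\<lambda>i. \<Sum>\<mu>\<in>insert \<nu> E. d \<mu> * C \<mu> i"] by blast
    have "(\<Sum>\<mu>\<in>insert \<nu> E. d \<mu> *s B \<mu>) = (\<Sum>i\<in>I. (\<Sum>\<mu>\<in>insert \<nu> E. d \<mu> * C \<mu> i) *s b i)"
      using lin_comb[where d=d and E="insert \<nu> E" and c=C and I=I and a=b] by (simp add: B_def)
    also have "\<dots> = 0" using z by simp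
    finally have s0: "(\<Sum>\<mu>\<in>insert \<nu> E. d \<mu> *s B \<mu>) = 0" .
    have "(\<Sum>\<mu>\<in>insert \<nu> E. d \<mu> *s B \<mu>) = (\<Sum>\<mu>\<in>insert \<nu> E. (d \<mu> * \<mu>) *s A \<mu>)"
      by (rule sum.cong) (simp_all add: BA)
    with s0 have "(\<Sum>\<mu>\<in>insert \<nu> E. (d \<mu> * \<mu>) *s A \<mu>) = 0" by simp
    moreover have "(\<Sum>\<mu>\<in>insert \<nu> E. (d \<mu> * \<nu>) *s A \<mu>) = 0"
    proof -
      have "(\<Sum>\<mu>\<in>insert \<nu> E. (d \<mu> * \<nu>) *s A \<mu>) = \<nu> *s (\<Sum>\<mu>\<in>insert \<nu> E. d \<mu> *s A \<mu>)"
        by (simp add: scale_sum_right mult.commute)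
      then show ?thesis using d0 by simp
    qed
    moreover have "(\<Sum>\<mu>\<in>insert \<nu> E. (d \<mu> * (\<mu> - \<nu>)) *s A \<mu>) =
       (\<Sum>\<mu>\<in>insert \<nu> E. (d \<mu> * \<mu>) *s A \<mu>) - (\<Sum>\<mu>\<in>insert \<nu> E. (d \<mu> * \<nu>) *s A \<mu>)"
      by (simp only: right_diff_distrib scale_left_diff_distrib sum_subtractf)
    ultimately have "(\<Sum>\<mu>\<in>insert \<nu> E. (d \<mu> * (\<mu> - \<nu>)) *s A \<mu>) = 0"
      by simp
    then have "(\<Sum>\<mu>\<in>E. (d \<mu> * (\<mu> - \<nu>)) *s A \<mu>) = 0"
      using insert.hyps by simp
    then have "\<forall>\<mu>\<in>E. d \<mu> * (\<mu> - \<nu>) = 0" using famindD[OF IH, where c="\<lambda>\<mu>. d \<mu> * (\<mu> - \<nu>)"] by blast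
    then have dE: "\<forall>\<mu>\<in>E. d \<mu> = 0" using insert.hyps by auto
    then have "d \<nu> *s A \<nu> = 0" using d0 insert.hyps by simp
    moreover have "A \<nu> \<noteq> 0"
    proof
      assume "A \<nu> = 0"
      then have "\<forall>i\<in>I. C \<nu> i = 0" using famindD[OF a, where c="C \<nu>"] unfolding A_def by blast
      then show False using insert.prems by auto
    qed
    ultimately have "d \<nu> = 0" by simp
    then show "\<forall>\<mu>\<in>insert \<nu> E. d \<mu> = 0" using dE by simp
  qed
qed

lemma eig_finite:
  fixes a b :: "'i \<Rightarrow> 'b"
  assumes I: "finite I" and a: "famind scale I a"
  shows "finite {\<mu>. \<exists>c. (\<exists>i\<in>I. c i \<noteq> 0) \<and> (\<Sum>i\<in>I. c i *s b i) = \<mu> *s (\<Sum>i\<in>I. c i *s a i)}"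
    (is "finite ?Eig")
proof (rule ccontr)
  assume inf: "infinite ?Eig"
  obtain E where E: "finite E" "card E = Suc (card I)" "E \<subseteq> ?Eig"
    using infinite_arbitrarily_large[OF inf] by blast
  define P where "P \<mu> c \<longleftrightarrow> (\<exists>i\<in>I. c i \<noteq> 0) \<and> (\<Sum>i\<in>I. c i *s b i) = \<mu> *s (\<Sum>i\<in>I. c i *s a i)"
    for \<mu> and c :: "'i \<Rightarrow> 'a"
  define C where "C \<mu> = (SOME c. P \<mu> c)" for \<mu>
  have CE: "P \<mu> (C \<mu>)" if "\<mu> \<in> E" for \<mu>
  proof -
    have "\<exists>c. P \<mu> c" using E(3) that unfolding P_def by blast
    then show ?thesis unfolding C_def by (rule someI_ex)
  qed
  have fi: "famind scale E (\<lambda>\<mu>. \<Sum>i\<in>I. C \<mu> i *s a i)"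
    by (rule eig_indep[OF I a E(1), where b=b]) (use CE in \<open>auto simp: P_def\<close>)
  let ?X = "(\<lambda>\<mu>. \<Sum>i\<in>I. C \<mu> i *s a i) ` E"
  have inj: "inj_on (\<lambda>\<mu>. \<Sum>i\<in>I. C \<mu> i *s a i) E" by (rule famindep_inj[OF fi E(1)])
  have ind: "independent ?X" by (rule famindep_indep[OF fi E(1)])
  have sp: "?X \<subseteq> span (a ` I)"
  proof (rule image_subsetI)
    fix \<mu> show "(\<Sum>i\<in>I. C \<mu> i *s a i) \<in> span (a ` I)"
      by (rule span_sum, rule span_scale, rule span_base) simp
  qed
  have "card ?X \<le> card (a ` I)"
    using independent_span_bound[OF finite_imageI[OF I] ind sp] by blast
  also have "\<dots> \<le> card I" by (rule card_image_le[OF I])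
  finally have "card E \<le> card I" using card_image[OF inj] by simp
  then show False using E(2) by simp
qed

lemma pencil:
  fixes a b :: "'i \<Rightarrow> 'b"
  assumes I: "finite I" and a: "famind scale I a"
  shows "finite {t. \<not> famind scale I (\<lambda>i. a i + t *s b i)}"
proof -
  let ?Eig = "{\<mu>. \<exists>c. (\<exists>i\<in>I. c i \<noteq> 0) \<and> (\<Sum>i\<in>I. c i *s b i) = \<mu> *s (\<Sum>i\<in>I. c i *s a i)}"
  have "{t. \<not> famind scale I (\<lambda>i. a i + t *s b i)} \<subseteq> (\<lambda>\<mu>. - inverse \<mu>) ` ?Eig"
  proof
    fix t assume "t \<in> {t. \<not> famind scale I (\<lambda>i. a i + t *s b i)}"
    then obtain c where c: "(\<Sum>i\<in>I. c i *s (a i + t *s b i)) = 0" and ci: "\<exists>i\<in>I. c i \<noteq> 0"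
      unfolding famind_def by blast
    have eq: "(\<Sum>i\<in>I. c i *s (a i + t *s b i)) = (\<Sum>i\<in>I. c i *s a i) + t *s (\<Sum>i\<in>I. c i *s b i)"
      by (simp add: scale_right_distrib sum.distrib scale_sum_right mult.commute)
    have t0: "t \<noteq> 0"
    proof
      assume "t = 0"
      then have "(\<Sum>i\<in>I. c i *s a i) = 0" using c eq by simp
      then show False using famindD[OF a] ci by blast
    qed
    have "(\<Sum>i\<in>I. c i *s b i) = (- inverse t) *s (\<Sum>i\<in>I. c i *s a i)"
    proof -
      have "(\<Sum>i\<in>I. c i *s a i) = - (t *s (\<Sum>i\<in>I. c i *s b i))" using c eq
        by (simp add: eq_neg_iff_add_eq_0)
      then have "(- inverse t) *s (\<Sum>i\<in>I. c i *s a i) = (inverse t * t) *s (\<Sum>i\<in>I. c i *s b i)"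
        by simp
      then show ?thesis using t0 by simp
    qed
    then have "- inverse t \<in> ?Eig" using ci by blast
    moreover have "t = - inverse (- inverse t)" by simp
    ultimately show "t \<in> (\<lambda>\<mu>. - inverse \<mu>) ` ?Eig" by (rule rev_image_eqI)
  qed
  moreover have "finite ?Eig" by (rule eig_finite[OF I a])
  ultimately show ?thesis by (rule finite_subset[OF _ finite_imageI])
qed

end

theorem lemma3p5:
  fixes sV :: "complex \<Rightarrow> 'v::ab_group_add \<Rightarrow> 'v"
    and sW :: "complex \<Rightarrow> 'w::ab_group_add \<Rightarrow> 'w"
    and s :: nat
    and M :: "nat \<Rightarrow> 'v \<Rightarrow> 'w"
  assumes "vector_space sV"
    and "vector_space sW"
    and "\<forall>i<s. Vector_Spaces.linear sV sW (M i)"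
    and "tuple_rank sW s M \<ge> enat s"
  shows "\<exists>v. vector_space.dim sW ((\<lambda>i. M i v) ` {..<s}) = s"
proof -
  interpret V: vector_space sV by fact
  interpret W: vector_space sW by fact
  have hom: "module_hom sV sW (M i)" if "i < s" for i
    using assms(3) that unfolding linear_iff_module_hom by simp
  have Mlin: "M i (x + sV t y) = M i x + sW t (M i y)" if "i < s" for i x t y
    using module_hom.add[OF hom[OF that]] module_hom.scale[OF hom[OF that]] by simp
  define F where "F v = (\<lambda>i. M i v) ` {..<s}" for v
  define d where "d v = W.dim (F v)" for v
  have finF: "finite (F v)" for v unfolding F_def by simp
  have dle: "d v \<le> s" for v
  proof -
    have "d v \<le> card (F v)" unfolding d_def by (rule W.dim_le_card[OF W.span_superset finF])
    also have "\<dots> \<le> s" unfolding F_def using card_image_le[of "{..<s}"] by simp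
    finally show ?thesis .
  qed
  have finD: "finite (range d)"
    by (rule finite_subset[of _ "{..s}"]) (use dle in auto)
  obtain v0 where v0: "\<And>v. d v \<le> d v0"
  proof -
    have "Max (range d) \<in> range d" using finD by (intro Max_in) auto
    then obtain v0 where v0: "d v0 = Max (range d)" by auto
    have "d v \<le> d v0" for v unfolding v0 by (rule Max_ge[OF finD]) simp
    then show ?thesis by (rule that)
  qed
  have "d v0 = s"
  proof (rule ccontr)
    assume "d v0 \<noteq> s"
    then have ds: "d v0 < s" using dle[of v0] by simp
    define u where "u i = M i v0" for i
    obtain B where B: "B \<subseteq> F v0" "W.independent B" "F v0 \<subseteq> W.span B" "card B = d v0"
      using W.basis_exists[of "F v0"] unfolding d_def by blast
    have finB: "finite B" using B(1) finF finite_subset by blast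
    obtain J where J: "J \<subseteq> {..<s}" "inj_on u J" "B = u ` J"
      using B(1) subset_image_inj[of B u "{..<s}"] unfolding F_def u_def by blast
    have finJ: "finite J" using J(1) finite_subset by blast
    have cardJ: "card J = d v0" using B(4) J card_image by metis
    obtain i0 where i0: "i0 < s" "i0 \<notin> J"
    proof -
      have "\<not> {..<s} \<subseteq> J" using card_mono[OF finJ, of "{..<s}"] cardJ ds by auto
      then show ?thesis using that by blast
    qed
    have "u i0 \<in> W.span B" using B(3) i0(1) unfolding F_def u_def by blast
    then obtain g where g: "(\<Sum>b\<in>B. sW (g b) b) = u i0"
      using W.span_finite[OF finB] by auto
    define cj where "cj j = g (u j)" for j
    have rep: "(\<Sum>j\<in>J. sW (cj j) (u j)) = u i0"
      using g sum.reindex[OF J(2), of "\<lambda>b. sW (g b) b"] J(3) by (simp add: cj_def)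
    define lam where "lam i = (if i = i0 then 1 else 0) - (if i \<in> J then cj i else 0)" for i
    define Lm where "Lm x = (\<Sum>i<s. sW (lam i) (M i x))" for x
    have Lmform: "Lm x = M i0 x - (\<Sum>j\<in>J. sW (cj j) (M j x))" for x
    proof -
      have "Lm x = (\<Sum>i<s. sW (if i = i0 then 1 else 0) (M i x)) - (\<Sum>i<s. sW (if i \<in> J then cj i else 0) (M i x))"
        unfolding Lm_def lam_def by (simp only: W.scale_left_diff_distrib sum_subtractf)
      also have "(\<Sum>i<s. sW (if i = i0 then 1 else 0) (M i x)) = (\<Sum>i<s. if i = i0 then M i x else 0)"
        by (rule sum.cong) auto
      also have "\<dots> = M i0 x" using i0 by simp
      also have "(\<Sum>i<s. sW (if i \<in> J then cj i else 0) (M i x)) = (\<Sum>i<s. if i \<in> J then sW (cj i) (M i x) else 0)"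
        by (rule sum.cong) auto
      also have "\<dots> = (\<Sum>i\<in>{..<s} \<inter> J. sW (cj i) (M i x))" by (rule sum.inter_restrict[symmetric]) simp
      also have "{..<s} \<inter> J = J" using J(1) by blast
      finally show ?thesis .
    qed
    have Lm0: "Lm v0 = 0" using Lmform[of v0] rep by (simp add: u_def)
    have Lmlin: "Lm (x + sV t y) = Lm x + sW t (Lm y)" for x t y
    proof -
      have "Lm (x + sV t y) = (\<Sum>i<s. sW (lam i) (M i x) + sW t (sW (lam i) (M i y)))"
        unfolding Lm_def
        by (rule sum.cong) (simp_all add: Mlin W.scale_right_distrib mult.commute)
      also have "\<dots> = Lm x + sW t (Lm y)"
        by (simp add: Lm_def sum.distrib W.scale_sum_right)
      finally show ?thesis .
    qed
    have Lmspan: "Lm x \<in> W.span (F x)" for x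
      unfolding Lm_def F_def
      by (rule W.span_sum, rule W.span_scale, rule W.span_base) simp
    have lam0: "\<exists>i<s. lam i \<noteq> 0" using i0 by (auto simp: lam_def intro!: exI[of _ i0])
    have rk: "enat s \<le> map_rank sW Lm"
    proof -
      have "tuple_rank sW s M \<le> map_rank sW Lm"
        unfolding tuple_rank_def Lm_def by (rule INF_lower) (use lam0 in simp)
      then show ?thesis using assms(4) by simp
    qed
    obtain w where w: "Lm w \<notin> W.span B"
    proof (rule ccontr)
      assume "\<not> thesis"
      then have rs: "range Lm \<subseteq> W.span B" using that by blast
      have "map_rank sW Lm \<le> enat (d v0)"
        unfolding map_rank_def
      proof (rule SUP_least)
        fix B' assume "B' \<in> {B. finite B \<and> B \<subseteq> range Lm \<and> \<not> module.dependent sW B}"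
        then have "B' \<subseteq> W.span B" "W.independent B'" using rs by auto
        then have "card B' \<le> card B" using W.independent_span_bound[OF finB] by blast
        then show "enat (card B') \<le> enat (d v0)" using B(4) by simp
      qed
      with rk have "enat s \<le> enat (d v0)" by (rule order_trans)
      then show False using ds by simp
    qed
    define z where "z = Lm w"
    define I where "I = insert i0 J"
    define a where "a i = (if i = i0 then z else u i)" for i
    define b where "b i = (if i = i0 then 0 else M i w)" for i
    have finI: "finite I" using finJ by (simp add: I_def)
    have famJ: "famind sW J u"
      by (rule W.indep_famindep[OF J(2) _ finJ]) (use B(2) J(3) in simp)
    have famI: "famind sW I a"
      unfolding famind_def
    proof (intro allI impI)
      fix c assume c: "(\<Sum>i\<in>I. sW (c i) (a i)) = 0"
      have split: "(\<Sum>i\<in>I. sW (c i) (a i)) = sW (c i0) z + (\<Sum>j\<in>J. sW (c j) (u j))"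
      proof -
        have "(\<Sum>j\<in>J. sW (c j) (a j)) = (\<Sum>j\<in>J. sW (c j) (u j))"
          by (rule sum.cong) (use i0(2) in \<open>auto simp: a_def\<close>)
        then show ?thesis unfolding I_def using finJ i0(2) by (simp add: a_def)
      qed
      have ci0: "c i0 = 0"
      proof (rule ccontr)
        assume cn: "c i0 \<noteq> 0"
        have "sW (c i0) z = - (\<Sum>j\<in>J. sW (c j) (u j))" using c split by (simp add: eq_neg_iff_add_eq_0)
        then have "sW (inverse (c i0)) (sW (c i0) z) = sW (inverse (c i0)) (- (\<Sum>j\<in>J. sW (c j) (u j)))"
          by simp
        then have "z = sW (inverse (c i0)) (- (\<Sum>j\<in>J. sW (c j) (u j)))" using cn by simp
        moreover have "sW (inverse (c i0)) (- (\<Sum>j\<in>J. sW (c j) (u j))) \<in> W.span B"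
          by (rule W.span_scale, rule W.span_neg, rule W.span_sum, rule W.span_scale, rule W.span_base)
             (use J(3) in auto)
        ultimately show False using w z_def by simp
      qed
      then have "(\<Sum>j\<in>J. sW (c j) (u j)) = 0" using c split by simp
      then have cJ: "c j = 0" if "j \<in> J" for j using famindD[OF famJ _ that] by blast
      show "\<forall>i\<in>I. c i = 0" using ci0 cJ by (auto simp: I_def)
    qed
    have finbad: "finite (insert 0 {t. \<not> famind sW I (\<lambda>i. a i + sW t (b i))})"
      using W.pencil[OF finI famI, of b] by simp
    obtain t where t: "t \<notin> insert 0 {t. \<not> famind sW I (\<lambda>i. a i + sW t (b i))}"
      using ex_new_if_finite[OF infinite_UNIV_char_0 finbad] by blast
    then have t0: "t \<noteq> 0" and ft: "famind sW I (\<lambda>i. a i + sW t (b i))" by auto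
    define v' where "v' = v0 + sV t w"
    define x where "x i = a i + sW t (b i)" for i
    have ft': "famind sW I x" using ft by (simp add: x_def[abs_def])
    have Xind: "W.independent (x ` I)" by (rule W.famindep_indep[OF ft' finI])
    have Xinj: "inj_on x I" by (rule W.famindep_inj[OF ft' finI])
    have Xsp: "x ` I \<subseteq> W.span (F v')"
    proof (rule image_subsetI)
      fix i assume "i \<in> I"
      show "x i \<in> W.span (F v')"
      proof (cases "i = i0")
        case True
        have "Lm v' = sW t z" unfolding v'_def Lmlin Lm0 z_def by simp
        then have "z = sW (inverse t) (Lm v')" using t0 by simp
        then have "z \<in> W.span (F v')" using Lmspan W.span_scale by metis
        then show ?thesis using True by (simp add: x_def a_def b_def)
      next
        case False
        then have iJ: "i \<in> J" "i < s" using \<open>i \<in> I\<close> J(1) I_def by auto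
        have "x i = M i v'" using False iJ by (simp add: x_def a_def b_def u_def v'_def Mlin)
        moreover have "M i v' \<in> F v'" using iJ unfolding F_def by blast
        ultimately show ?thesis using W.span_base by simp
      qed
    qed
    obtain B' where B': "B' \<subseteq> F v'" "W.independent B'" "F v' \<subseteq> W.span B'" "card B' = d v'"
      using W.basis_exists[of "F v'"] unfolding d_def by blast
    have finB': "finite B'" using B'(1) finF finite_subset by blast
    have "W.span (F v') \<subseteq> W.span B'" using W.span_mono[OF B'(3)] W.span_span by simp
    then have "x ` I \<subseteq> W.span B'" using Xsp by (rule order_trans[rotated])
    then have "card (x ` I) \<le> card B'" using W.independent_span_bound[OF finB' Xind] by simp
    then have "card I \<le> d v'" using card_image[OF Xinj] B'(4) by simp
    moreover have "card I = Suc (d v0)" using finJ i0(2) cardJ by (simp add: I_def)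
    ultimately show False using v0[of v'] by simp
  qed
  then show ?thesis unfolding d_def F_def by blast
qed

end
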